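(* In the construction below, for every directed path $\langle(u_0,0),(u_1,1),\dots,(u_K,K)\rangle$ in $\mathcal D$ from the root to level $K$, $$\sum_{k=0}^{K-1}\log\big(1/\theta_{(u_k,k)(u_{k+1},k+1)}\big)\le 3\log n.$$ In particular $\Delta_I(\hat{\mathcal D})\le3\log n$.
   Context: Construction. Let $(X,d)$ be a metric space with $n=|X|\ge2$ and $\mathrm{diam}(X)=1$. For $S\subseteq X$, $r\ge0$: $B_X(S,r):=\{x\in X:\exists s\in S,\ d(x,s)\le r\}$ and $B_X(x,r):=B_X(\{x\},r)$. Let $\varepsilon_0:=\min\{d(x,y):x\ne y\}$, $\tau:=12$, $K:=1+\lceil\log_\tau(1/\varepsilon_0)\rceil$. For $\eta>0$ the greedy $\eta$-net is built as: $N_0=\emptyset$; for $j\ge1$, $S_j:=X\setminus B_X(N_{j-1},\eta)$; if $S_j=\emptyset$ output $N_{j-1}$; else pick $x_j\in S_j$ maximizing $|B_X(x,\eta/3)|$ and set $N_j=N_{j-1}\cup\{x_j\}$. For $k=0,\dots,K$ let $U_k$ be the greedy $\tau^{-k}$-net (so $U_0$ is a single point and $U_K=X$). For $k<K$, $A_k$ is the set of pairs $(u,u')\in U_k\times U_{k+1}$ with (i) $d(u,u')\le4\tau^{-k}$ and (ii) $|B_X(u,\tau^{-k}/3)|\ge\max\{|B_X(w,\tau^{-k}/3)|:w\in B_X(u',6\tau^{-(k+1)})\}$. The directed graph $\mathcal D$ has vertex set $\{(u,k):u\in U_k,\ 0\le k\le K\}$, arcs $((u,k),(u',k+1))$ for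 $(u,u')\in A_k$, root $(u,0)$ with $U_0=\{u\}$, and the vertices $(x,K)$ are identified with $x\in X$. Arc weights: $\omega_{(u,k)(u',k+1)}:=10\tau^{-k}$ and $\theta_{(u,k)(u',k+1)}:=|B_X(u',\tau^{-(k+1)}/3)|\big/\sum_{w:(u,w)\in A_k}|B_X(w,\tau^{-(k+1)}/3)|$. $\hat{\mathcal D}=(\mathcal D,\omega,\theta)$; $\Delta_I(\hat{\mathcal D})$ is the maximum over root-to-level-$K$ paths $\gamma$ of $\log(1/\prod_{a\in\gamma}\theta_a)$. *)

theory Defs
  imports Complex_Main
begin

definition metric_on :: "'a set \<Rightarrow> ('a \<Rightarrow> 'a \<Rightarrow> real) \<Rightarrow> bool" where
  "metric_on X d \<longleftrightarrow>
     (\<forall>x\<in>X. d x x = 0) \<and>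
     (\<forall>x\<in>X. \<forall>y\<in>X. x \<noteq> y \<longrightarrow> d x y > 0) \<and>
     (\<forall>x\<in>X. \<forall>y\<in>X. d x y = d y x) \<and>
     (\<forall>x\<in>X. \<forall>y\<in>X. \<forall>z\<in>X. d x z \<le> d x y + d y z)"

definition diam :: "'a set \<Rightarrow> ('a \<Rightarrow> 'a \<Rightarrow> real) \<Rightarrow> real" where
  "diam X d = Max {d x y | x y. x \<in> X \<and> y \<in> X}"

definition ballX :: "'a set \<Rightarrow> ('a \<Rightarrow> 'a \<Rightarrow> real) \<Rightarrow> 'a set \<Rightarrow> real \<Rightarrow> 'a set" where
  "ballX X d S r = {x \<in> X. \<exists>s\<in>S. d x s \<le> r}"

definition eps0 :: "'a set \<Rightarrow> ('a \<Rightarrow> 'a \<Rightarrow> real) \<Rightarrow> real" where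
  "eps0 X d = Min {d x y | x y. x \<in> X \<and> y \<in> X \<and> x \<noteq> y}"

definition tau :: real where "tau = 12"

definition Klev :: "'a set \<Rightarrow> ('a \<Rightarrow> 'a \<Rightarrow> real) \<Rightarrow> nat" where
  "Klev X d = 1 + nat \<lceil>log tau (1 / eps0 X d)\<rceil>"

text \<open>N is an output of the greedy eta-net procedure (for some admissible choice
  of the maximizers when there are ties): xs lists x_1, x_2, ... in order.\<close>
definition greedy_net :: "'a set \<Rightarrow> ('a \<Rightarrow> 'a \<Rightarrow> real) \<Rightarrow> real \<Rightarrow> 'a set \<Rightarrow> bool" where
  "greedy_net X d \<eta> N \<longleftrightarrow>
     (\<exists>xs. N = set xs \<and>
        (\<forall>j < length xs.
           xs ! j \<in> X - ballX X d (set (take j xs)) \<eta> \<and>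
           (\<forall>y \<in> X - ballX X d (set (take j xs)) \<eta>.
               card (ballX X d {y} (\<eta>/3)) \<le> card (ballX X d {xs ! j} (\<eta>/3)))) \<and>
        X - ballX X d (set xs) \<eta> = {})"

definition arcs :: "'a set \<Rightarrow> ('a \<Rightarrow> 'a \<Rightarrow> real) \<Rightarrow> (nat \<Rightarrow> 'a set) \<Rightarrow> nat \<Rightarrow> ('a \<times> 'a) set" where
  "arcs X d U k = {(u, u'). u \<in> U k \<and> u' \<in> U (Suc k) \<and>
      d u u' \<le> 4 * tau powi (- int k) \<and>
      (\<forall>w \<in> ballX X d {u'} (6 * tau powi (- int (Suc k))).
         card (ballX X d {w} (tau powi (- int k) / 3)) \<le> card (ballX X d {u} (tau powi (- int k) / 3)))}"

definition theta :: "'a set \<Rightarrow> ('a \<Rightarrow> 'a \<Rightarrow> real) \<Rightarrow> (nat \<Rightarrow> 'a set) \<Rightarrow> nat \<Rightarrow> 'a \<Rightarrow> 'a \<Rightarrow> real" where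
  "theta X d U k u u' =
     real (card (ballX X d {u'} (tau powi (- int (Suc k)) / 3))) /
     (\<Sum>w \<in> {w. (u, w) \<in> arcs X d U k}. real (card (ballX X d {w} (tau powi (- int (Suc k)) / 3))))"

end

theory Submission
  imports Defs
begin
lemma r_eq: "tau powi (- int k) = 1/12^k"
  by (simp add: tau_def power_int_minus divide_inverse)

lemma met_sym: "metric_on X d \<Longrightarrow> x \<in> X \<Longrightarrow> y \<in> X \<Longrightarrow> d x y = d y x"
  unfolding metric_on_def by blast
lemma met_tri: "metric_on X d \<Longrightarrow> x \<in> X \<Longrightarrow> y \<in> X \<Longrightarrow> z \<in> X \<Longrightarrow> d x z \<le> d x y + d y z"
  unfolding metric_on_def by blast
lemma met_0: "metric_on X d \<Longrightarrow> x \<in> X \<Longrightarrow> d x x = 0"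
  unfolding metric_on_def by blast

lemma ballX_single: "x \<in> ballX X d {w} r \<longleftrightarrow> x \<in> X \<and> d x w \<le> r"
  by (simp add: ballX_def)

lemma greedy_xs:
  assumes "greedy_net X d \<eta> N"
  obtains xs where "N = set xs" "\<And>j. j < length xs \<Longrightarrow> xs ! j \<in> X - ballX X d (set (take j xs)) \<eta>"
proof -
  from assms obtain xs where 1: "N = set xs" and 2: "\<forall>j<length xs. xs ! j \<in> X - ballX X d (set (take j xs)) \<eta> \<and>
           (\<forall>y \<in> X - ballX X d (set (take j xs)) \<eta>.
               card (ballX X d {y} (\<eta>/3)) \<le> card (ballX X d {xs ! j} (\<eta>/3)))"
    unfolding greedy_net_def by blast
  show ?thesis using that[OF 1] 2 by blast
qed

lemma greedy_sub: assumes "greedy_net X d \<eta> N" shows "N \<subseteq> X"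
proof
  fix x assume x: "x \<in> N"
  obtain xs where N: "N = set xs" and H: "\<And>j. j < length xs \<Longrightarrow> xs ! j \<in> X - ballX X d (set (take j xs)) \<eta>"
    using greedy_xs[OF assms] by blast
  obtain i where "i < length xs" "xs!i = x" using x N by (auto simp: in_set_conv_nth)
  then show "x \<in> X" using H by blast
qed

lemma greedy_sep:
  assumes g: "greedy_net X d \<eta> N" and m: "metric_on X d"
    and x: "x \<in> N" and y: "y \<in> N" and xy: "x \<noteq> y"
  shows "d x y > \<eta>"
proof -
  obtain xs where N: "N = set xs" and H: "\<And>j. j < length xs \<Longrightarrow> xs ! j \<in> X - ballX X d (set (take j xs)) \<eta>"
    using greedy_xs[OF g] by blast
  have key: "d (xs!j) (xs!i) > \<eta>" if "i < j" "j < length xs" for i j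
  proof (rule ccontr)
    assume "\<not> ?thesis"
    then have le: "d (xs!j) (xs!i) \<le> \<eta>" by simp
    have "take j xs ! i = xs ! i" "i < length (take j xs)" using that by simp_all
    then have "xs!i \<in> set (take j xs)" by (metis nth_mem)
    moreover have "xs!j \<in> X" using H[OF that(2)] by simp
    ultimately have "xs!j \<in> ballX X d (set (take j xs)) \<eta>" using le unfolding ballX_def by blast
    then show False using H[OF that(2)] by simp
  qed
  obtain i where i: "i < length xs" "xs!i = x" using x N by (auto simp: in_set_conv_nth)
  obtain j where j: "j < length xs" "xs!j = y" using y N by (auto simp: in_set_conv_nth)
  have XN: "N \<subseteq> X" using greedy_sub[OF g] .
  have sym: "d x y = d y x" using met_sym[OF m] x y XN by blast
  have "i \<noteq> j" using i j xy by auto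
  then show ?thesis
  proof (cases "i < j")
    case True then show ?thesis using key[of i j] i j sym by simp
  next
    case False then show ?thesis using key[of j i] i j \<open>i \<noteq> j\<close> by simp
  qed
qed

lemma sum_card_disj:
  assumes fin: "finite X" and m: "metric_on X d" and g: "greedy_net X d \<eta> N"
    and pos: "\<eta> > 0" and W: "W \<subseteq> N"
  shows "(\<Sum>w\<in>W. real (card (ballX X d {w} (\<eta>/3)))) = real (card (\<Union>w\<in>W. ballX X d {w} (\<eta>/3)))"
proof -
  have XN: "N \<subseteq> X" using greedy_sub[OF g] .
  have finW: "finite W" using finite_subset[OF subset_trans[OF W XN] fin] .
  have finB: "\<forall>w\<in>W. finite (ballX X d {w} (\<eta>/3))" using fin by (simp add: ballX_def)
  have disj: "\<forall>w1\<in>W. \<forall>w2\<in>W. w1 \<noteq> w2 \<longrightarrow> ballX X d {w1} (\<eta>/3) \<inter> ballX X d {w2} (\<eta>/3) = {}"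
  proof (intro ballI impI)
    fix w1 w2 assume w1: "w1 \<in> W" and w2: "w2 \<in> W" and ne: "w1 \<noteq> w2"
    show "ballX X d {w1} (\<eta>/3) \<inter> ballX X d {w2} (\<eta>/3) = {}"
    proof (rule ccontr)
      assume "\<not> ?thesis"
      then obtain x where "x \<in> ballX X d {w1} (\<eta>/3)" "x \<in> ballX X d {w2} (\<eta>/3)" by blast
      then have x: "x \<in> X" "d x w1 \<le> \<eta>/3" "d x w2 \<le> \<eta>/3" by (simp_all add: ballX_single)
      have w1X: "w1 \<in> X" and w2X: "w2 \<in> X" using w1 w2 W XN by (simp_all add: subset_iff)
      have "d w1 w2 \<le> d w1 x + d x w2" using met_tri[OF m w1X x(1) w2X] .
      moreover have "d w1 x = d x w1" using met_sym[OF m w1X x(1)] .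
      moreover have "d w1 w2 > \<eta>" using greedy_sep[OF g m _ _ ne] w1 w2 W by (simp add: subset_iff)
      ultimately show False using x pos by linarith
    qed
  qed
  have "card (\<Union>w\<in>W. ballX X d {w} (\<eta>/3)) = (\<Sum>w\<in>W. card (ballX X d {w} (\<eta>/3)))"
    using card_UN_disjoint[OF finW finB disj] .
  then show ?thesis by simp
qed

lemma abstract_sum:
  fixes s a :: "nat \<Rightarrow> real" and L :: real
  assumes s_le: "\<And>k. k < K \<Longrightarrow> s k \<le> L"
    and s_le2: "\<And>j. j + 2 < K \<Longrightarrow> s (j+2) \<le> a j"
    and a_nn: "\<And>j. j \<le> K \<Longrightarrow> a j \<ge> 0"
    and a0: "a 0 \<le> L"
  shows "(\<Sum>k<K. s k - a (Suc k)) \<le> 3*L"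
proof -
  have inv: "n \<le> K \<Longrightarrow> (\<Sum>k<n. s k - a (Suc k)) \<le> 3*L - a n
     - (if n \<ge> 1 then a (n-1) else 0) - (if n \<ge> 2 then a (n-2) else 0)" for n
  proof (induction n)
    case 0 then show ?case using a0 a_nn[of 0] by simp
  next
    case (Suc n)
    show ?case
    proof (cases "n = 0")
      case True
      then show ?thesis using s_le[of 0] Suc.prems a0 a_nn[of 0] by simp
    next
      case nz: False
      show ?thesis
      proof (cases "n = 1")
        case True
        then have "(\<Sum>k<Suc n. s k - a (Suc k)) = s 0 - a 1 + (s 1 - a 2)"
          by (simp add: numeral_2_eq_2)
        then show ?thesis using True s_le[of 0] s_le[of 1] Suc.prems a0 by simp
      next
        case False
        then obtain m where m: "n = m + 2" using nz
          by (metis add_2_eq_Suc' not0_implies_Suc One_nat_def)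
        have IH: "(\<Sum>k<n. s k - a (Suc k)) \<le> 3*L - a n - a (n-1) - a (n-2)"
          using Suc m by simp
        have "s n \<le> a m" using s_le2[of m] m Suc.prems by simp
        then show ?thesis using IH m by simp
      qed
    qed
  qed
  have "(\<Sum>k<K. s k - a (Suc k)) \<le> 3*L - a K
     - (if K \<ge> 1 then a (K-1) else 0) - (if K \<ge> 2 then a (K-2) else 0)"
    using inv by simp
  moreover have "a K \<ge> 0" "(if K \<ge> 1 then a (K-1) else 0) \<ge> 0" "(if K \<ge> 2 then a (K-2) else 0) \<ge> 0"
    using a_nn by auto
  ultimately show ?thesis by linarith
qed

theorem lemma3p5:
  fixes X :: "'a set" and d :: "'a \<Rightarrow> 'a \<Rightarrow> real"
    and U :: "nat \<Rightarrow> 'a set" and u :: "nat \<Rightarrow> 'a"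
  assumes "finite X" and "card X \<ge> 2"
    and "metric_on X d"
    and "diam X d = 1"
    and "\<And>k. k \<le> Klev X d \<Longrightarrow> greedy_net X d (tau powi (- int k)) (U k)"
    and "\<And>k. k \<le> Klev X d \<Longrightarrow> u k \<in> U k"
    and "\<And>k. k < Klev X d \<Longrightarrow> (u k, u (Suc k)) \<in> arcs X d U k"
  shows "(\<Sum>k < Klev X d. ln (1 / theta X d U k (u k) (u (Suc k)))) \<le> 3 * ln (real (card X))"
proof -
  note fin = assms(1) and m = assms(3) and gn = assms(5) and uU = assms(6) and arc = assms(7)
  define K where "K = Klev X d"
  define r where "r k = tau powi (- int k)" for k
  have r_eq': "r k = 1/12^k" for k unfolding r_def by (rule r_eq)
  have rpos: "r k > 0" for k unfolding r_eq' by simp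
  have rS: "r (Suc k) = r k / 12" for k unfolding r_eq' by simp
  have UX: "U k \<subseteq> X" if "k \<le> K" for k using greedy_sub[OF gn] that K_def by blast
  have uX: "u k \<in> X" if "k \<le> K" for k using UX[OF that] uU[of k] that K_def by blast
  define c where "c j = card (ballX X d {u j} (r j / 3))" for j
  have c_ge1: "1 \<le> c j" if "j \<le> K" for j
  proof -
    have "u j \<in> ballX X d {u j} (r j / 3)"
      using uX[OF that] met_0[OF m uX[OF that]] rpos[of j] by (simp add: ballX_single)
    moreover have "finite (ballX X d {u j} (r j / 3))" using fin by (simp add: ballX_def)
    ultimately show ?thesis unfolding c_def
      by (metis One_nat_def Suc_leI card_gt_0_iff empty_iff)
  qed
  have c_le: "c j \<le> card X" for j
    unfolding c_def by (rule card_mono[OF fin]) (auto simp: ballX_def)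
  define W where "W k = {w. (u k, w) \<in> arcs X d U k}" for k
  define S where "S k = (\<Sum>w\<in>W k. real (card (ballX X d {w} (r (Suc k) / 3))))" for k
  have theta_eq: "theta X d U k (u k) (u (Suc k)) = real (c (Suc k)) / S k" for k
    by (simp add: theta_def c_def S_def W_def r_def)
  have WU: "W k \<subseteq> U (Suc k)" for k unfolding W_def arcs_def by auto
  have Sunion: "S k = real (card (\<Union>w\<in>W k. ballX X d {w} (r (Suc k) / 3)))" if "k < K" for k
  proof -
    have g: "greedy_net X d (r (Suc k)) (U (Suc k))" using gn[of "Suc k"] that K_def r_def by simp
    show ?thesis unfolding S_def by (rule sum_card_disj[OF fin m g rpos WU])
  qed
  have finW: "finite (W k)" if "k < K" for k
    using finite_subset[OF subset_trans[OF WU UX] fin] that by simp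
  have S_le_n: "S k \<le> real (card X)" if "k < K" for k
  proof -
    have "card (\<Union>w\<in>W k. ballX X d {w} (r (Suc k) / 3)) \<le> card X"
      by (rule card_mono[OF fin]) (auto simp: ballX_def)
    then show ?thesis using Sunion[OF that] by simp
  qed
  have S_ge: "real (c (Suc k)) \<le> S k" if "k < K" for k
  proof -
    have "u (Suc k) \<in> W k" using arc[of k] that K_def W_def by simp
    then have "real (card (ballX X d {u (Suc k)} (r (Suc k) / 3))) \<le> S k"
      unfolding S_def by (rule member_le_sum) (auto simp: finW[OF that])
    then show ?thesis by (simp add: c_def)
  qed
  have S_le_c: "S (j+2) \<le> real (c j)" if "j + 2 < K" for j
  proof -
    define k where "k = j + 2"
    have kK: "k < K" using that k_def by simp
    have arcj: "(u j, u (Suc j)) \<in> arcs X d U j" using arc[of j] that K_def by simp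
    have arcj1: "(u (Suc j), u k) \<in> arcs X d U (Suc j)" using arc[of "Suc j"] that K_def k_def by simp
    have ukX: "u k \<in> X" using uX[of k] kK by simp
    have uj1X: "u (Suc j) \<in> X" using uX[of "Suc j"] that by simp
    have "d (u (Suc j)) (u k) \<le> 4 * r (Suc j)" using arcj1 unfolding arcs_def r_def by simp
    then have "d (u k) (u (Suc j)) \<le> 6 * r (Suc j)"
      using met_sym[OF m ukX uj1X] rpos[of "Suc j"] by simp
    then have "u k \<in> ballX X d {u (Suc j)} (6 * tau powi (- int (Suc j)))"
      using ukX by (simp add: ballX_single r_def)
    then have cmp: "card (ballX X d {u k} (r j / 3)) \<le> c j"
      using arcj unfolding arcs_def c_def r_def by blast
    have sub: "(\<Union>w\<in>W k. ballX X d {w} (r (Suc k) / 3)) \<subseteq> ballX X d {u k} (r j / 3)"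
    proof
      fix x assume "x \<in> (\<Union>w\<in>W k. ballX X d {w} (r (Suc k) / 3))"
      then obtain w where w: "w \<in> W k" and xb: "x \<in> ballX X d {w} (r (Suc k) / 3)" by blast
      have xX: "x \<in> X" and dx: "d x w \<le> r (Suc k) / 3" using xb by (simp_all add: ballX_single)
      have wX: "w \<in> X" using w WU UX[of "Suc k"] kK by auto
      have dw: "d (u k) w \<le> 4 * r k" using w unfolding W_def arcs_def r_def by simp
      have "d x (u k) \<le> d x w + d w (u k)" by (rule met_tri[OF m xX wX ukX])
      also have "d w (u k) = d (u k) w" by (rule met_sym[OF m wX ukX])
      finally have "d x (u k) \<le> r (Suc k) / 3 + 4 * r k" using dx dw by linarith
      moreover have "r (Suc k) / 3 + 4 * r k \<le> r j / 3"
        using rS[of k] rS[of "Suc j"] rS[of j] rpos[of k] k_def by (simp add: numeral_2_eq_2)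
      ultimately show "x \<in> ballX X d {u k} (r j / 3)" using xX by (simp add: ballX_single)
    qed
    have "card (\<Union>w\<in>W k. ballX X d {w} (r (Suc k) / 3)) \<le> card (ballX X d {u k} (r j / 3))"
      by (rule card_mono[OF _ sub]) (use fin in \<open>simp add: ballX_def\<close>)
    then show ?thesis using Sunion[OF kK] cmp k_def by simp
  qed
  have ln_eq: "ln (1 / theta X d U k (u k) (u (Suc k))) = ln (S k) - ln (real (c (Suc k)))"
    if "k < K" for k
  proof -
    have cpos: "real (c (Suc k)) > 0" using c_ge1[of "Suc k"] that by simp
    have Spos: "S k > 0" using S_ge[OF that] cpos by linarith
    have "1 / theta X d U k (u k) (u (Suc k)) = S k / real (c (Suc k))" by (simp add: theta_eq)
    then show ?thesis using cpos Spos by (simp add: ln_div)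
  qed
  have "(\<Sum>k<K. ln (1 / theta X d U k (u k) (u (Suc k)))) = (\<Sum>k<K. ln (S k) - ln (real (c (Suc k))))"
    by (rule sum.cong) (simp_all add: ln_eq)
  also have "\<dots> \<le> 3 * ln (real (card X))"
  proof (rule abstract_sum)
    fix k assume k: "k < K"
    have cpos: "real (c (Suc k)) > 0" using c_ge1[of "Suc k"] k by simp
    have Spos: "S k > 0" using S_ge[OF k] cpos by linarith
    show "ln (S k) \<le> ln (real (card X))" using S_le_n[OF k] Spos by simp
  next
    fix j assume j: "j + 2 < K"
    have cpos: "real (c (Suc (j+2))) > 0" using c_ge1[of "Suc (j+2)"] j by simp
    have Spos: "S (j+2) > 0" using S_ge[OF j] cpos by linarith
    show "ln (S (j+2)) \<le> ln (real (c j))" using S_le_c[OF j] Spos by simp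
  next
    fix j assume "j \<le> K"
    then show "0 \<le> ln (real (c j))" using c_ge1[of j] by simp
  next
    show "ln (real (c 0)) \<le> ln (real (card X))" using c_ge1[of 0] c_le[of 0] by simp
  qed
  finally show ?thesis unfolding K_def .
qed

end
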